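(* Let $c\in\mathbb{C}$ and consider the complex system \[ \dot z = z+\tfrac{1}{36}\big(-9c z^2+18czw-9cw^2-2c^2z^3+6c^2z^2w-6c^2zw^2+2c^2w^3\big), \] \[ \dot w = -w+\tfrac{1}{36}\big(9c z^2-18czw+9cw^2-2c^2z^3+6c^2z^2w-6c^2zw^2+2c^2w^3\big). \] Put \[ l_1=z-\tfrac{c}{12}(z-w)^2,\quad l_2=w-\tfrac{c}{12}(z-w)^2,\quad l_3=1-\tfrac{2c}{3}(z+w)+\tfrac{2c^2}{9}(z-w)^2,\quad l_4=1-\tfrac{c}{3}(z+w)+\tfrac{c^2}{18}(z-w)^2 . \] Then $l_1,\dots,l_4$ are Darboux factors of the system and the analytic change of coordinates $z_1=l_1l_3l_4^{-3}$, $w_1=l_2l_3l_4^{-3}$ (defined near the origin) transforms the system into $\dot z_1=z_1$, $\dot w_1=-w_1$.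
   Context: A Darboux factor of a system $\dot z = F(z,w)$, $\dot w = G(z,w)$ is a polynomial $f(z,w)$ such that $f_zF+f_wG=Kf$ for some polynomial $K$, called its cofactor. *)

theory Defs
  imports "HOL-Analysis.Analysis" "HOL-Computational_Algebra.Polynomial"
begin

text \<open>Bivariate polynomials in z, w over the complex numbers are represented as
  complex poly poly: the outer variable is w, coefficients are polynomials in z.\<close>

type_synonym bipoly = "complex poly poly"

definition varZ :: bipoly where "varZ = [:[:0, 1:]:]"
definition varW :: bipoly where "varW = [:0, 1:]"
definition cst :: "complex \<Rightarrow> bipoly" where "cst a = [:[:a:]:]"

definition eval2 :: "bipoly \<Rightarrow> complex \<Rightarrow> complex \<Rightarrow> complex" where
  "eval2 P z w = poly (poly P [:w:]) z"

definition dZ :: "bipoly \<Rightarrow> bipoly" where "dZ P = map_poly pderiv P"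
definition dW :: "bipoly \<Rightarrow> bipoly" where "dW P = pderiv P"

definition darboux_factor :: "bipoly \<Rightarrow> bipoly \<Rightarrow> bipoly \<Rightarrow> bool" where
  "darboux_factor F G f \<longleftrightarrow> (\<exists>K. dZ f * F + dW f * G = K * f)"

definition sysF :: "complex \<Rightarrow> bipoly" where
  "sysF c = varZ + cst (1/36) * (- cst (9*c) * varZ^2 + cst (18*c) * varZ * varW
     - cst (9*c) * varW^2 - cst (2*c^2) * varZ^3 + cst (6*c^2) * varZ^2 * varW
     - cst (6*c^2) * varZ * varW^2 + cst (2*c^2) * varW^3)"

definition sysG :: "complex \<Rightarrow> bipoly" where
  "sysG c = - varW + cst (1/36) * (cst (9*c) * varZ^2 - cst (18*c) * varZ * varW
     + cst (9*c) * varW^2 - cst (2*c^2) * varZ^3 + cst (6*c^2) * varZ^2 * varW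
     - cst (6*c^2) * varZ * varW^2 + cst (2*c^2) * varW^3)"

definition l1 :: "complex \<Rightarrow> bipoly" where
  "l1 c = varZ - cst (c/12) * (varZ - varW)^2"
definition l2 :: "complex \<Rightarrow> bipoly" where
  "l2 c = varW - cst (c/12) * (varZ - varW)^2"
definition l3 :: "complex \<Rightarrow> bipoly" where
  "l3 c = 1 - cst (2*c/3) * (varZ + varW) + cst (2*c^2/9) * (varZ - varW)^2"
definition l4 :: "complex \<Rightarrow> bipoly" where
  "l4 c = 1 - cst (c/3) * (varZ + varW) + cst (c^2/18) * (varZ - varW)^2"

definition vfield :: "complex \<Rightarrow> complex \<times> complex \<Rightarrow> complex \<times> complex" where
  "vfield c p = (eval2 (sysF c) (fst p) (snd p), eval2 (sysG c) (fst p) (snd p))"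

definition coordchange :: "complex \<Rightarrow> complex \<times> complex \<Rightarrow> complex \<times> complex" where
  "coordchange c p =
     (let z = fst p; w = snd p in
      (eval2 (l1 c) z w * eval2 (l3 c) z w / (eval2 (l4 c) z w) ^ 3,
       eval2 (l2 c) z w * eval2 (l3 c) z w / (eval2 (l4 c) z w) ^ 3))"

end

theory Submission
  imports Defs
begin

lemma eval2_simps[simp]:
  "eval2 (P + Q) z w = eval2 P z w + eval2 Q z w"
  "eval2 (P - Q) z w = eval2 P z w - eval2 Q z w"
  "eval2 (P * Q) z w = eval2 P z w * eval2 Q z w"
  "eval2 (- P) z w = - eval2 P z w"
  "eval2 (P ^ n) z w = eval2 P z w ^ n"
  "eval2 1 z w = 1" "eval2 0 z w = 0"
  "eval2 varZ z w = z" "eval2 varW z w = w" "eval2 (cst a) z w = a"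
  by (simp_all add: eval2_def varZ_def varW_def cst_def poly_power)

lemma eval2_numeral[simp]: "eval2 (numeral n) z w = numeral n"
  by (simp add: eval2_def)

lemma eval2_pCons: "eval2 (pCons a Q) z w = poly a z + w * eval2 Q z w"
  by (simp add: eval2_def)

lemma eval2_map: "eval2 R z w = poly (map_poly (\<lambda>r. poly r z) R) w"
  by (induction R) (auto simp: eval2_def map_poly_pCons)

lemma eval2_inj:
  assumes "\<And>z w. eval2 P z w = eval2 Q z w" shows "P = Q"
proof -
  define R where "R = P - Q"
  have "\<And>z w. poly (map_poly (\<lambda>r. poly r z) R) w = 0"
    using assms by (simp add: R_def flip: eval2_map)
  then have "\<And>z. map_poly (\<lambda>r. poly r z) R = 0"
    using poly_all_0_iff_0 by blast
  then have "\<And>z i. poly (coeff R i) z = 0"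
    by (metis coeff_0 coeff_map_poly poly_0)
  then have "\<And>i. coeff R i = 0"
    using poly_all_0_iff_0 by blast
  then have "R = 0" by (simp add: poly_eqI)
  then show ?thesis by (simp add: R_def)
qed

lemma dZ_add[simp]: "dZ (P + Q) = dZ P + dZ Q"
  by (rule poly_eqI) (simp add: dZ_def coeff_map_poly pderiv_add)
lemma dZ_minus[simp]: "dZ (- P) = - dZ P"
  by (rule poly_eqI) (simp add: dZ_def coeff_map_poly pderiv_minus)
lemma dZ_diff[simp]: "dZ (P - Q) = dZ P - dZ Q"
  by (rule poly_eqI) (simp add: dZ_def coeff_map_poly pderiv_diff)
lemma dZ_smult: "dZ (smult a Q) = smult (pderiv a) Q + smult a (dZ Q)"
  by (rule poly_eqI) (simp add: dZ_def coeff_map_poly pderiv_mult)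
lemma dZ_pCons: "dZ (pCons a Q) = pCons (pderiv a) (dZ Q)"
  by (simp add: dZ_def map_poly_pCons)
lemma dZ_mult[simp]: "dZ (P * Q) = dZ P * Q + P * dZ Q"
proof (induction P)
  case 0 then show ?case by (simp add: dZ_def)
next
  case (pCons a P)
  then show ?case
    by (simp add: dZ_smult dZ_pCons algebra_simps)
qed
lemma dZ_basic[simp]: "dZ varZ = 1" "dZ varW = 0" "dZ (cst a) = 0" "dZ 1 = 0"
  by (simp_all add: dZ_def varZ_def varW_def cst_def one_pCons pderiv_pCons map_poly_pCons)
lemma dW_basic[simp]: "dW varZ = 0" "dW varW = 1" "dW (cst a) = 0" "dW 1 = 0"
  by (simp_all add: dW_def varZ_def varW_def cst_def one_pCons pderiv_pCons)
lemma dW_ops[simp]: "dW (P + Q) = dW P + dW Q" "dW (P - Q) = dW P - dW Q"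
  "dW (- P) = - dW P" "dW (P * Q) = dW P * Q + P * dW Q"
  by (simp_all add: dW_def pderiv_add pderiv_diff pderiv_minus pderiv_mult)

lemma eval2_deriv:
  "((\<lambda>x. eval2 P (fst x) (snd x)) has_derivative
     (\<lambda>h. eval2 (dZ P) (fst p) (snd p) * fst h + eval2 (dW P) (fst p) (snd p) * snd h)) (at p)"
proof (induction P)
  case 0 then show ?case by (simp add: dZ_def dW_def eval2_def)
next
  case (pCons a Q)
  have ha: "((\<lambda>x. poly a (fst x)) has_derivative (\<lambda>h. poly (pderiv a) (fst p) * fst h)) (at p)"
    by (rule has_derivative_compose[OF has_derivative_fst[OF has_derivative_ident] 
        poly_DERIV[of a "fst p", unfolded has_field_derivative_def]])
  have "((\<lambda>x. poly a (fst x) + snd x * eval2 Q (fst x) (snd x)) has_derivative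
     (\<lambda>h. poly (pderiv a) (fst p) * fst h + (snd p * (eval2 (dZ Q) (fst p) (snd p) * fst h + eval2 (dW Q) (fst p) (snd p) * snd h)
       + snd h * eval2 Q (fst p) (snd p)))) (at p)"
    by (intro derivative_intros ha pCons)
  then show ?case
    by (simp add: eval2_pCons dZ_pCons dW_def pderiv_pCons algebra_simps)
qed


lemma dar1: "dZ (l1 c) * sysF c + dW (l1 c) * sysG c = (1 + cst (c/3) * (varW - varZ)) * l1 c"
  apply (rule eval2_inj)
  apply (simp add: l1_def sysF_def sysG_def power2_eq_square power3_eq_cube)
  apply (simp add: field_simps)
  done

lemma dar2: "dZ (l2 c) * sysF c + dW (l2 c) * sysG c = (- 1 + cst (c/3) * (varW - varZ)) * l2 c"
  apply (rule eval2_inj)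
  apply (simp add: l2_def sysF_def sysG_def power2_eq_square power3_eq_cube)
  apply (simp add: field_simps)
  done

lemma dar3: "dZ (l3 c) * sysF c + dW (l3 c) * sysG c = (cst (2*c/3) * (varW - varZ)) * l3 c"
  apply (rule eval2_inj)
  apply (simp add: l3_def sysF_def sysG_def power2_eq_square power3_eq_cube)
  apply (simp add: field_simps)
  done

lemma dar4: "dZ (l4 c) * sysF c + dW (l4 c) * sysG c = (cst (c/3) * (varW - varZ)) * l4 c"
  apply (rule eval2_inj)
  apply (simp add: l4_def sysF_def sysG_def power2_eq_square power3_eq_cube)
  apply (simp add: field_simps)
  done

definition qd :: "(complex \<times> complex \<Rightarrow> complex) \<Rightarrow> (complex \<times> complex \<Rightarrow> complex) \<Rightarrow> (complex \<times> complex \<Rightarrow> complex)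
  \<Rightarrow> (complex \<times> complex \<Rightarrow> complex) \<Rightarrow> (complex \<times> complex \<Rightarrow> complex) \<Rightarrow> (complex \<times> complex \<Rightarrow> complex)
  \<Rightarrow> complex \<times> complex \<Rightarrow> complex \<times> complex \<Rightarrow> complex" where
  "qd f1 f3 f4 f1' f3' f4' p h = - (f1 p * f3 p) * (inverse (f4 p ^ 3) * (of_nat 3 * f4' h * f4 p ^ (3 - 1)) * inverse (f4 p ^ 3))
     + (f1 p * f3' h + f1' h * f3 p) / f4 p ^ 3"

lemma quot_deriv:
  assumes "(f1 has_derivative f1') (at p)" "(f3 has_derivative f3') (at p)" "(f4 has_derivative f4') (at p)"
    "f4 p \<noteq> 0"
  shows "((\<lambda>x. f1 x * f3 x / f4 x ^ 3) has_derivative qd f1 f3 f4 f1' f3' f4' p) (at p)"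
proof -
  have "((\<lambda>x. f1 x * f3 x / f4 x ^ 3) has_derivative (\<lambda>h. qd f1 f3 f4 f1' f3' f4' p h)) (at p)"
    unfolding qd_def
    by (intro has_derivative_divide has_derivative_mult has_derivative_power assms) (simp add: assms)
  then show ?thesis by simp
qed

lemma quot_val:
  assumes "gd p \<noteq> 0" "ga' v = ka * ga p" "gb' v = kb * gb p" "gd' v = kd * gd p"
  shows "qd ga gb gd ga' gb' gd' p v = (ka + kb - 3 * kd) * (ga p * gb p / gd p ^ 3)"
  using assms by (simp add: qd_def field_simps eval_nat_numeral)

definition E :: "bipoly \<Rightarrow> complex \<times> complex \<Rightarrow> complex" where
  "E P x = eval2 P (fst x) (snd x)"
definition E' :: "bipoly \<Rightarrow> complex \<times> complex \<Rightarrow> complex \<times> complex \<Rightarrow> complex" where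
  "E' P p h = eval2 (dZ P) (fst p) (snd p) * fst h + eval2 (dW P) (fst p) (snd p) * snd h"

lemma E_deriv: "(E P has_derivative E' P p) (at p)"
  using eval2_deriv[of P p] unfolding E_def E'_def by simp

lemma cc_eq: "coordchange c = (\<lambda>x. (E (l1 c) x * E (l3 c) x / E (l4 c) x ^ 3, E (l2 c) x * E (l3 c) x / E (l4 c) x ^ 3))"
  by (auto simp: coordchange_def E_def Let_def fun_eq_iff)

lemma cc_deriv:
  assumes "E (l4 c) p \<noteq> 0"
  shows "(coordchange c has_derivative (\<lambda>h. (qd (E (l1 c)) (E (l3 c)) (E (l4 c)) (E' (l1 c) p) (E' (l3 c) p) (E' (l4 c) p) p h,
                                            qd (E (l2 c)) (E (l3 c)) (E (l4 c)) (E' (l2 c) p) (E' (l3 c) p) (E' (l4 c) p) p h))) (at p)"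
  unfolding cc_eq
  by (intro has_derivative_Pair quot_deriv E_deriv assms)

lemma E'_vfield: "E' P p (vfield c p) = eval2 (dZ P * sysF c + dW P * sysG c) (fst p) (snd p)"
  by (simp add: E'_def vfield_def)


lemma E_l4_0[simp]: "E (l4 c) (0,0) = 1" and E_l3_0[simp]: "E (l3 c) (0,0) = 1"
  and E_l1_0[simp]: "E (l1 c) (0,0) = 0" and E_l2_0[simp]: "E (l2 c) (0,0) = 0"
  by (simp_all add: E_def l1_def l2_def l3_def l4_def)

lemma cont_E: "continuous_on UNIV (E P)"
  by (meson E_deriv continuous_at_imp_continuous_on has_derivative_continuous)

theorem mainTheorem3:
  fixes c :: complex
  shows "darboux_factor (sysF c) (sysG c) (l1 c)
       \<and> darboux_factor (sysF c) (sysG c) (l2 c)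
       \<and> darboux_factor (sysF c) (sysG c) (l3 c)
       \<and> darboux_factor (sysF c) (sysG c) (l4 c)
       \<and> coordchange c (0, 0) = (0, 0)
       \<and> (coordchange c has_derivative id) (at (0, 0))
       \<and> (\<exists>U. open U \<and> (0, 0) \<in> U \<and>
             (\<forall>p\<in>U. eval2 (l4 c) (fst p) (snd p) \<noteq> 0 \<and>
                (\<exists>D. (coordchange c has_derivative D) (at p) \<and>
                     D (vfield c p) = (fst (coordchange c p), - snd (coordchange c p)))))"
proof (intro conjI)
  show "darboux_factor (sysF c) (sysG c) (l1 c)" unfolding darboux_factor_def using dar1 by blast
  show "darboux_factor (sysF c) (sysG c) (l2 c)" unfolding darboux_factor_def using dar2 by blast
  show "darboux_factor (sysF c) (sysG c) (l3 c)" unfolding darboux_factor_def using dar3 by blast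
  show "darboux_factor (sysF c) (sysG c) (l4 c)" unfolding darboux_factor_def using dar4 by blast
  show "coordchange c (0, 0) = (0, 0)" by (simp add: cc_eq)
  have "(coordchange c has_derivative (\<lambda>h. (qd (E (l1 c)) (E (l3 c)) (E (l4 c)) (E' (l1 c) (0,0)) (E' (l3 c) (0,0)) (E' (l4 c) (0,0)) (0,0) h,
           qd (E (l2 c)) (E (l3 c)) (E (l4 c)) (E' (l2 c) (0,0)) (E' (l3 c) (0,0)) (E' (l4 c) (0,0)) (0,0) h))) (at (0,0))"
    by (rule cc_deriv) simp
  moreover have "(\<lambda>h. (qd (E (l1 c)) (E (l3 c)) (E (l4 c)) (E' (l1 c) (0,0)) (E' (l3 c) (0,0)) (E' (l4 c) (0,0)) (0,0) h,
           qd (E (l2 c)) (E (l3 c)) (E (l4 c)) (E' (l2 c) (0,0)) (E' (l3 c) (0,0)) (E' (l4 c) (0,0)) (0,0) h)) = id"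
    by (auto simp: fun_eq_iff qd_def E'_def E_def l1_def l2_def l3_def l4_def power2_eq_square)
  ultimately show "(coordchange c has_derivative id) (at (0, 0))" by simp
  show "\<exists>U. open U \<and> (0, 0) \<in> U \<and>
             (\<forall>p\<in>U. eval2 (l4 c) (fst p) (snd p) \<noteq> 0 \<and>
                (\<exists>D. (coordchange c has_derivative D) (at p) \<and>
                     D (vfield c p) = (fst (coordchange c p), - snd (coordchange c p))))"
  proof (rule exI[of _ "{p. E (l4 c) p \<noteq> 0}"], intro conjI ballI)
    show "open {p. E (l4 c) p \<noteq> 0}" by (rule open_Collect_neq[OF cont_E]) simp
    show "(0,0) \<in> {p. E (l4 c) p \<noteq> 0}" by simp
    fix p assume "p \<in> {p. E (l4 c) p \<noteq> 0}"
    then have p: "E (l4 c) p \<noteq> 0" by simp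
    then show "eval2 (l4 c) (fst p) (snd p) \<noteq> 0" by (simp add: E_def)
    have v1: "E' (l1 c) p (vfield c p) = (1 + c/3 * (snd p - fst p)) * E (l1 c) p"
      by (simp add: E'_vfield dar1 E_def)
    have v2: "E' (l2 c) p (vfield c p) = (- 1 + c/3 * (snd p - fst p)) * E (l2 c) p"
      by (simp add: E'_vfield dar2 E_def)
    have v3: "E' (l3 c) p (vfield c p) = (2*c/3 * (snd p - fst p)) * E (l3 c) p"
      by (simp add: E'_vfield dar3 E_def)
    have v4: "E' (l4 c) p (vfield c p) = (c/3 * (snd p - fst p)) * E (l4 c) p"
      by (simp add: E'_vfield dar4 E_def)
    show "\<exists>D. (coordchange c has_derivative D) (at p) \<and>
                     D (vfield c p) = (fst (coordchange c p), - snd (coordchange c p))"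
    proof (rule exI, rule conjI)
      show "(coordchange c has_derivative (\<lambda>h. (qd (E (l1 c)) (E (l3 c)) (E (l4 c)) (E' (l1 c) p) (E' (l3 c) p) (E' (l4 c) p) p h,
                                            qd (E (l2 c)) (E (l3 c)) (E (l4 c)) (E' (l2 c) p) (E' (l3 c) p) (E' (l4 c) p) p h))) (at p)"
        by (rule cc_deriv[OF p])
      show "(\<lambda>h. (qd (E (l1 c)) (E (l3 c)) (E (l4 c)) (E' (l1 c) p) (E' (l3 c) p) (E' (l4 c) p) p h,
                                            qd (E (l2 c)) (E (l3 c)) (E (l4 c)) (E' (l2 c) p) (E' (l3 c) p) (E' (l4 c) p) p h)) (vfield c p)
            = (fst (coordchange c p), - snd (coordchange c p))"
      by (simp add: quot_val[where gd="E (l4 c)" and ga="E (l1 c)" and gb="E (l3 c)" and p=p and v="vfield c p" and ga'="E' (l1 c) p" and gb'="E' (l3 c) p" and gd'="E' (l4 c) p", OF p v1 v3 v4] quot_val[where gd="E (l4 c)" and ga="E (l2 c)" and gb="E (l3 c)" and p=p and v="vfield c p" and ga'="E' (l2 c) p" and gb'="E' (l3 c) p" and gd'="E' (l4 c) p", OF p v2 v3 v4] cc_eq)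
    qed
  qed
qed

end
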